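(* Let $h:(\mathbb{R}^n,0)\to(\mathbb{R}^n,0)$ be a Lipschitz homeomorphism germ such that $c_1\|x\|\le\|h(x)\|\le c_2\|x\|$ for some constants $c_1,c_2>0$ and all $x$ in a neighbourhood of $0$. Then $h$ is an (SSP) map if and only if for every semiline $\ell$ the restriction $h|_\ell$ is an (SSP) map.
   Context: A semiline is a set $\{ta:t\ge0\}$ with $a\in S^{n-1}$. For a set-germ $A\subset\mathbb{R}^k$ at $0$ with $0\in\overline A$, $D(A)=\{a\in S^{k-1}:\exists\, x_i\in A\setminus\{0\},\ x_i\to0,\ x_i/\|x_i\|\to a\}$. For sequences, $\|u_m\|\ll\|v_m\|,\|w_m\|$ means $\|u_m\|/\|v_m\|\to0$ and $\|u_m\|/\|w_m\|\to0$. $A$ satisfies condition (SSP) if for every sequence $a_m\in\mathbb{R}^k$ tending to $0$ with $\lim a_m/\|a_m\|\in D(A)$ there is a sequence $b_m\in A$ with $\|a_m-b_m\|\ll\|a_m\|,\|b_m\|$. A map germ $f:(S,0)\to(\mathbb{R}^n,0)$ defined on a set $S\subset\mathbb{R}^n$ with $0\in\overline S$ is an (SSP) map if its graph $\{(x,f(x)):x\in S\}\subset\mathbb{R}^n\times\mathbb{R}^n$ satisfies condition (SSP) at $(0,0)$. *)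

theory Defs
  imports "HOL-Analysis.Analysis"
begin

definition semiline :: "'a::real_normed_vector \<Rightarrow> 'a set" where
  "semiline a = {t *\<^sub>R a | t. t \<ge> 0}"

definition limit_directions :: "'b::real_normed_vector set \<Rightarrow> 'b set" where
  "limit_directions A = {a. norm a = 1 \<and>
     (\<exists>x::nat \<Rightarrow> 'b. (\<forall>i. x i \<in> A - {0}) \<and> x \<longlonglongrightarrow> 0 \<and>
        (\<lambda>i. x i /\<^sub>R norm (x i)) \<longlonglongrightarrow> a)}"

definition SSP :: "'b::real_normed_vector set \<Rightarrow> bool" where
  "SSP A \<longleftrightarrow>
     (\<forall>a::nat \<Rightarrow> 'b. a \<longlonglongrightarrow> 0 \<and>
        (\<exists>d \<in> limit_directions A. (\<lambda>m. a m /\<^sub>R norm (a m)) \<longlonglongrightarrow> d)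
      \<longrightarrow> (\<exists>b::nat \<Rightarrow> 'b. (\<forall>m. b m \<in> A) \<and>
             (\<lambda>m. norm (a m - b m) / norm (a m)) \<longlonglongrightarrow> 0 \<and>
             (\<lambda>m. norm (a m - b m) / norm (b m)) \<longlonglongrightarrow> 0))"

definition SSP_map :: "('a::real_normed_vector \<Rightarrow> 'c::real_normed_vector) \<Rightarrow> 'a set \<Rightarrow> bool" where
  "SSP_map f S \<longleftrightarrow> SSP {(x, f x) | x. x \<in> S}"

end

theory Submission
  imports Defs
begin

definition closeS :: "(nat \<Rightarrow> 'b::real_normed_vector) \<Rightarrow> (nat \<Rightarrow> 'b) \<Rightarrow> bool" where
  "closeS p q \<longleftrightarrow> (\<lambda>m. norm (p m - q m) / norm (p m)) \<longlonglongrightarrow> 0"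

lemma L1:
  fixes p :: "nat \<Rightarrow> 'b::real_normed_vector"
  assumes "(\<lambda>m. p m /\<^sub>R norm (p m)) \<longlonglongrightarrow> d" "norm d = 1"
  shows "eventually (\<lambda>m. p m \<noteq> 0) sequentially"
proof -
  have "(\<lambda>m. norm (p m /\<^sub>R norm (p m))) \<longlonglongrightarrow> 1"
    using tendsto_norm[OF assms(1)] assms(2) by simp
  then have "eventually (\<lambda>m. norm (p m /\<^sub>R norm (p m)) > 1/2) sequentially"
    by (rule order_tendstoD) simp
  then show ?thesis by eventually_elim auto
qed

lemma L2:
  fixes p q :: "nat \<Rightarrow> 'b::real_normed_vector"
  assumes "closeS p q" "eventually (\<lambda>m. p m \<noteq> 0) sequentially"
  shows "(\<lambda>m. norm (q m) / norm (p m)) \<longlonglongrightarrow> 1"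
proof -
  have "(\<lambda>m. norm (q m) / norm (p m) - 1) \<longlonglongrightarrow> 0"
  proof (rule Lim_null_comparison)
    show "eventually (\<lambda>m. norm (norm (q m) / norm (p m) - 1) \<le> norm (p m - q m) / norm (p m)) sequentially"
      using assms(2)
    proof eventually_elim
      case (elim m)
      then have pos: "norm (p m) > 0" by simp
      have "norm (q m) / norm (p m) - 1 = (norm (q m) - norm (p m)) / norm (p m)"
        using pos by (simp add: field_simps)
      moreover have "\<bar>norm (q m) - norm (p m)\<bar> \<le> norm (p m - q m)"
        by (metis norm_minus_commute norm_triangle_ineq3)
      ultimately show ?case using pos by (simp add: abs_div divide_right_mono)
    qed
    show "(\<lambda>m. norm (p m - q m) / norm (p m)) \<longlonglongrightarrow> 0" using assms(1) closeS_def by blast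
  qed
  then show ?thesis using LIM_zero_iff by blast
qed

lemma L2q:
  fixes p q :: "nat \<Rightarrow> 'b::real_normed_vector"
  assumes "closeS p q" "eventually (\<lambda>m. p m \<noteq> 0) sequentially"
  shows "eventually (\<lambda>m. q m \<noteq> 0) sequentially"
proof -
  have "eventually (\<lambda>m. norm (q m) / norm (p m) > 0) sequentially"
    using L2[OF assms] by (rule order_tendstoD) simp
  then show ?thesis by eventually_elim auto
qed

lemma L2b:
  fixes p q :: "nat \<Rightarrow> 'b::real_normed_vector"
  assumes "closeS p q" "eventually (\<lambda>m. p m \<noteq> 0) sequentially"
  shows "closeS q p"
proof -
  have "(\<lambda>m. (norm (p m - q m) / norm (p m)) / (norm (q m) / norm (p m))) \<longlonglongrightarrow> 0 / 1"
    by (rule tendsto_divide) (use assms L2 closeS_def in auto)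
  moreover have "eventually (\<lambda>m. (norm (p m - q m) / norm (p m)) / (norm (q m) / norm (p m))
      = norm (q m - p m) / norm (q m)) sequentially"
    using assms(2) by eventually_elim (simp add: norm_minus_commute)
  ultimately show ?thesis unfolding closeS_def using Lim_transform_eventually by fastforce
qed

lemma L3:
  fixes p q r :: "nat \<Rightarrow> 'b::real_normed_vector"
  assumes "closeS p q" "closeS q r" "eventually (\<lambda>m. p m \<noteq> 0) sequentially"
  shows "closeS p r"
  unfolding closeS_def
proof (rule Lim_null_comparison)
  have q: "eventually (\<lambda>m. q m \<noteq> 0) sequentially" using L2q assms by blast
  show "eventually (\<lambda>m. norm (norm (p m - r m) / norm (p m)) \<le>
     norm (p m - q m) / norm (p m) + (norm (q m - r m) / norm (q m)) * (norm (q m) / norm (p m))) sequentially"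
    using assms(3) q
  proof eventually_elim
    case (elim m)
    have "p m - r m = (p m - q m) + (q m - r m)" by simp
    then have "norm (p m - r m) \<le> norm (p m - q m) + norm (q m - r m)"
      by (metis norm_triangle_ineq)
    then show ?case using elim by (simp add: add_divide_distrib[symmetric] divide_right_mono)
  qed
  show "(\<lambda>m. norm (p m - q m) / norm (p m) + (norm (q m - r m) / norm (q m)) * (norm (q m) / norm (p m))) \<longlonglongrightarrow> 0"
    using tendsto_add[OF assms(1)[unfolded closeS_def] tendsto_mult[OF assms(2)[unfolded closeS_def] L2[OF assms(1,3)]]]
    by simp
qed

lemma L4:
  fixes p q :: "nat \<Rightarrow> 'b::real_normed_vector"
  assumes "closeS p q" "eventually (\<lambda>m. p m \<noteq> 0) sequentially"
    "(\<lambda>m. p m /\<^sub>R norm (p m)) \<longlonglongrightarrow> d"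
  shows "(\<lambda>m. q m /\<^sub>R norm (q m)) \<longlonglongrightarrow> d"
proof -
  have qp: "closeS q p" using L2b assms by blast
  have q: "eventually (\<lambda>m. q m \<noteq> 0) sequentially" using L2q assms by blast
  have r: "(\<lambda>m. norm (p m) / norm (q m)) \<longlonglongrightarrow> 1" using L2[OF qp q] .
  have "(\<lambda>m. q m /\<^sub>R norm (q m) - p m /\<^sub>R norm (p m)) \<longlonglongrightarrow> 0"
  proof (rule Lim_null_comparison)
    show "eventually (\<lambda>m. norm (q m /\<^sub>R norm (q m) - p m /\<^sub>R norm (p m)) \<le>
      norm (q m - p m) / norm (q m) + \<bar>norm (p m) / norm (q m) - 1\<bar>) sequentially"
      using assms(2) q
    proof eventually_elim
      case (elim m)
      have e: "q m /\<^sub>R norm (q m) - p m /\<^sub>R norm (p m) =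
          (q m - p m) /\<^sub>R norm (q m) + (1 / norm (q m) - 1 / norm (p m)) *\<^sub>R p m"
        by (simp add: scaleR_diff_left scaleR_diff_right divide_inverse_commute)
      have "norm ((1 / norm (q m) - 1 / norm (p m)) *\<^sub>R p m) = \<bar>norm (p m) / norm (q m) - 1\<bar>"
      proof -
        have "norm ((1 / norm (q m) - 1 / norm (p m)) *\<^sub>R p m) = \<bar>1 / norm (q m) - 1 / norm (p m)\<bar> * norm (p m)"
          by simp
        also have "\<dots> = \<bar>(1 / norm (q m) - 1 / norm (p m)) * norm (p m)\<bar>" by (simp add: abs_mult)
        also have "(1 / norm (q m) - 1 / norm (p m)) * norm (p m) = norm (p m) / norm (q m) - 1"
          using elim by (simp add: field_simps)
        finally show ?thesis .
      qed
      moreover have "norm ((q m - p m) /\<^sub>R norm (q m)) = norm (q m - p m) / norm (q m)"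
        by (simp add: divide_inverse_commute)
      ultimately show ?case unfolding e
        using norm_triangle_ineq[of "(q m - p m) /\<^sub>R norm (q m)" "(1 / norm (q m) - 1 / norm (p m)) *\<^sub>R p m"]
        by linarith
    qed
    show "(\<lambda>m. norm (q m - p m) / norm (q m) + \<bar>norm (p m) / norm (q m) - 1\<bar>) \<longlonglongrightarrow> 0"
      using tendsto_add[OF qp[unfolded closeS_def] tendsto_rabs[OF LIM_zero[OF r]]] by simp
  qed
  from tendsto_add[OF this assms(3)] show ?thesis by simp
qed

lemma L5:
  fixes p q :: "nat \<Rightarrow> 'b::real_normed_vector"
  assumes "closeS p q" "eventually (\<lambda>m. p m \<noteq> 0) sequentially" "p \<longlonglongrightarrow> 0"
  shows "q \<longlonglongrightarrow> 0"
proof (rule Lim_null_comparison)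
  show "eventually (\<lambda>m. norm (q m) \<le> norm (p m) + (norm (p m - q m) / norm (p m)) * norm (p m)) sequentially"
    using assms(2)
  proof eventually_elim
    case (elim m)
    then show ?case using norm_triangle_ineq4[of "p m" "p m - q m"] by simp
  qed
  show "(\<lambda>m. norm (p m) + (norm (p m - q m) / norm (p m)) * norm (p m)) \<longlonglongrightarrow> 0"
    using tendsto_add[OF tendsto_norm_zero[OF assms(3)] tendsto_mult[OF assms(1)[unfolded closeS_def] tendsto_norm_zero[OF assms(3)]]]
    by simp
qed

lemma nsc: "(c::real) \<ge> 0 \<Longrightarrow> norm (v /\<^sub>R c) = norm (v::'a::real_normed_vector) / c"
  by (simp add: divide_inverse mult.commute)
lemma sc2: "(v::'a::real_normed_vector) /\<^sub>R c - (a / c) *\<^sub>R w = (v - a *\<^sub>R w) /\<^sub>R c"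
  by (simp add: scaleR_diff_right divide_inverse mult.commute)

lemma graph_mem: "b \<in> {(x, h x) |x. x \<in> S} \<longleftrightarrow> fst b \<in> S \<and> b = (fst b, h (fst b))"
  by (cases b) auto

lemma D_mono: "A \<subseteq> B \<Longrightarrow> limit_directions A \<subseteq> limit_directions B"
  unfolding limit_directions_def by blast

lemma core:
  fixes h :: "'a::euclidean_space \<Rightarrow> 'a" and x y :: "nat \<Rightarrow> 'a"
  assumes U: "open U" "0 \<in> U" and lip: "L-lipschitz_on U h"
    and bnd0: "\<forall>x\<in>U. norm (h x) \<le> c2 * norm x" and c2: "c2 > 0"
    and xU: "\<And>m. x m \<in> U" and x0: "x \<longlonglongrightarrow> 0"
    and dlim: "(\<lambda>m. (x m, h (x m)) /\<^sub>R norm (x m, h (x m))) \<longlonglongrightarrow> d" and nd: "norm d = 1"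
    and a0: "a0 = fst d /\<^sub>R norm (fst d)"
    and y: "y = (\<lambda>m. norm (x m) *\<^sub>R a0)"
  shows "fst d \<noteq> 0" "norm a0 = 1" "y \<longlonglongrightarrow> 0" "eventually (\<lambda>m. y m \<in> U) sequentially"
    "closeS (\<lambda>m. (x m, h (x m))) (\<lambda>m. (y m, h (y m)))"
proof -
  have bnd: "norm (h v) \<le> c2 * norm v" if "v \<in> U" for v using bnd0 that by blast
  define r where "r m = norm (x m, h (x m))" for m
  have wne: "eventually (\<lambda>m. (x m, h (x m)) \<noteq> 0) sequentially"
    using L1[OF dlim nd] .
  have Fst: "(\<lambda>m. x m /\<^sub>R r m) \<longlonglongrightarrow> fst d"
    using tendsto_fst[OF dlim] by (simp add: r_def)
  have nrm: "norm (v /\<^sub>R r m) = norm v / r m" for m and v :: 'a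
    by (rule nsc) (simp add: r_def)
  have nx: "(\<lambda>m. norm (x m) / r m) \<longlonglongrightarrow> norm (fst d)"
    using tendsto_norm[OF Fst] by (simp only: nrm)
  have lb: "eventually (\<lambda>m. 1 / (1 + c2) \<le> norm (x m) / r m) sequentially"
    using wne
  proof eventually_elim
    case (elim m)
    have rpos: "r m > 0" using elim by (simp add: r_def)
    have "r m \<le> norm (x m) + norm (h (x m))" unfolding r_def by (rule norm_Pair_le)
    also have "\<dots> \<le> (1 + c2) * norm (x m)" using bnd[OF xU[of m]] by (simp add: algebra_simps)
    finally have "r m \<le> (1 + c2) * norm (x m)" .
    then show ?case using rpos c2 by (simp add: field_simps)
  qed
  have "1 / (1 + c2) \<le> norm (fst d)"
    by (rule tendsto_lowerbound[OF nx lb]) simp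
  then show fd: "fst d \<noteq> 0" using c2 by auto
  then show na0: "norm a0 = 1" using a0 by simp
  show y0: "y \<longlonglongrightarrow> 0"
  proof -
    have "(\<lambda>m. norm (y m)) \<longlonglongrightarrow> 0" using tendsto_norm_zero[OF x0] na0 by (simp add: y)
    then show ?thesis by (simp only: tendsto_norm_zero_iff)
  qed
  show yU: "eventually (\<lambda>m. y m \<in> U) sequentially"
    using y0 U unfolding tendsto_def by auto
  have "(\<lambda>m. x m /\<^sub>R r m - (norm (x m) / r m) *\<^sub>R a0) \<longlonglongrightarrow> fst d - norm (fst d) *\<^sub>R a0"
    by (rule tendsto_diff[OF Fst tendsto_scaleR[OF nx tendsto_const]])
  moreover have "fst d - norm (fst d) *\<^sub>R a0 = 0" using fd a0 by simp
  moreover have "x m /\<^sub>R r m - (norm (x m) / r m) *\<^sub>R a0 = (x m - y m) /\<^sub>R r m" for m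
    unfolding y by (rule sc2)
  ultimately have "(\<lambda>m. (x m - y m) /\<^sub>R r m) \<longlonglongrightarrow> 0" by simp
  then have dxy: "(\<lambda>m. norm (x m - y m) / r m) \<longlonglongrightarrow> 0"
    using tendsto_norm_zero[of "\<lambda>m. (x m - y m) /\<^sub>R r m"] by (simp only: nrm)
  have L0: "0 \<le> L" using lipschitz_on_nonneg[OF lip] .
  show "closeS (\<lambda>m. (x m, h (x m))) (\<lambda>m. (y m, h (y m)))"
    unfolding closeS_def
  proof (rule Lim_null_comparison)
    show "eventually (\<lambda>m. norm (norm ((x m, h (x m)) - (y m, h (y m))) / norm (x m, h (x m)))
       \<le> (1 + L) * (norm (x m - y m) / r m)) sequentially"
      using yU
    proof eventually_elim
      case (elim m)
      have "norm ((x m, h (x m)) - (y m, h (y m))) \<le> norm (x m - y m) + norm (h (x m) - h (y m))"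
        using norm_Pair_le[of "x m - y m" "h (x m) - h (y m)"] by simp
      also have "norm (h (x m) - h (y m)) \<le> L * norm (x m - y m)"
        using lipschitz_onD[OF lip xU[of m] elim] by (simp add: dist_norm)
      finally have "norm ((x m, h (x m)) - (y m, h (y m))) \<le> (1 + L) * norm (x m - y m)"
        by (simp add: algebra_simps)
      then show ?case
        by (simp add: r_def divide_right_mono)
    qed
    show "(\<lambda>m. (1 + L) * (norm (x m - y m) / r m)) \<longlonglongrightarrow> 0"
      using tendsto_mult_right_zero[OF dxy] by simp
  qed
qed

lemma DIR:
  fixes h :: "'a::euclidean_space \<Rightarrow> 'a"
  assumes a0: "norm a0 = 1"
    and d: "d \<in> limit_directions {(x, h x) |x. x \<in> semiline a0 \<inter> U}"
  shows "fst d = (fst d \<bullet> a0) *\<^sub>R a0" "fst d \<bullet> a0 \<ge> 0"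
proof -
  obtain w where w: "\<And>i. w i \<in> {(x, h x) |x. x \<in> semiline a0 \<inter> U} - {0}"
    and wl: "(\<lambda>i. w i /\<^sub>R norm (w i)) \<longlonglongrightarrow> d"
    using d unfolding limit_directions_def by blast
  define v where "v i = fst (w i) /\<^sub>R norm (w i)" for i
  have aa: "a0 \<bullet> a0 = 1" using a0 by (simp add: dot_square_norm)
  have vi: "v i = (v i \<bullet> a0) *\<^sub>R a0 \<and> v i \<bullet> a0 \<ge> 0" for i
  proof -
    have "fst (w i) \<in> semiline a0" using w[of i] by auto
    then obtain t where t: "t \<ge> 0" "fst (w i) = t *\<^sub>R a0" unfolding semiline_def by blast
    have "v i = (t / norm (w i)) *\<^sub>R a0" unfolding v_def t(2) by (simp add: divide_inverse mult.commute)
    then show ?thesis using t(1) aa by simp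
  qed
  have vl: "v \<longlonglongrightarrow> fst d" using tendsto_fst[OF wl] unfolding v_def[abs_def] by simp
  have il: "(\<lambda>i. v i \<bullet> a0) \<longlonglongrightarrow> fst d \<bullet> a0" by (rule tendsto_inner[OF vl tendsto_const])
  have "(\<lambda>i. (v i \<bullet> a0) *\<^sub>R a0) \<longlonglongrightarrow> (fst d \<bullet> a0) *\<^sub>R a0"
    by (rule tendsto_scaleR[OF il tendsto_const])
  moreover have "(\<lambda>i. (v i \<bullet> a0) *\<^sub>R a0) = v"
    by (rule ext, rule sym, rule conjunct1[OF vi])
  ultimately have "v \<longlonglongrightarrow> (fst d \<bullet> a0) *\<^sub>R a0" by simp
  then show "fst d = (fst d \<bullet> a0) *\<^sub>R a0" using vl LIMSEQ_unique by blast
  show "fst d \<bullet> a0 \<ge> 0"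
    by (rule tendsto_lowerbound[OF il]) (use vi in auto)
qed

theorem proposition4p9:
  fixes h g :: "'a::euclidean_space \<Rightarrow> 'a" and U :: "'a set" and c1 c2 L :: real
  assumes "open U" and "0 \<in> U" and "h 0 = 0"
    and "L-lipschitz_on U h"
    and "homeomorphism U (h ` U) h g"
    and "c1 > 0" and "c2 > 0"
    and "\<And>x. x \<in> U \<Longrightarrow> c1 * norm x \<le> norm (h x) \<and> norm (h x) \<le> c2 * norm x"
  shows "SSP_map h U \<longleftrightarrow> (\<forall>a. norm a = 1 \<longrightarrow> SSP_map h (semiline a \<inter> U))"
proof -
  note U = assms(1,2) and h0 = assms(3) and lip = assms(4) and c2 = assms(7)
  have bnd: "\<And>x. x \<in> U \<Longrightarrow> norm (h x) \<le> c2 * norm x" using assms(8) by blast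
  have bnd0: "\<forall>x\<in>U. norm (h x) \<le> c2 * norm x" using bnd by blast
  define G where "G = {(x, h x) |x. x \<in> U}"
  define GL where "GL a = {(x, h x) |x. x \<in> semiline a \<inter> U}" for a
  have GLG: "GL a \<subseteq> G" for a unfolding GL_def G_def by blast
  have semi0: "0 \<in> semiline a" for a :: 'a unfolding semiline_def by (rule CollectI, rule exI[of _ 0]) simp
  have semit: "t *\<^sub>R a \<in> semiline a" if "t \<ge> 0" for a :: 'a and t
    unfolding semiline_def using that by blast
  show ?thesis
  proof
    assume S: "SSP_map h U"
    show "\<forall>a. norm a = 1 \<longrightarrow> SSP_map h (semiline a \<inter> U)"
    proof (intro allI impI)
      fix a0 :: 'a assume a0: "norm a0 = 1"
      show "SSP_map h (semiline a0 \<inter> U)" unfolding SSP_map_def SSP_def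
      proof (intro allI impI)
        fix p :: "nat \<Rightarrow> 'a \<times> 'a"
        assume "p \<longlonglongrightarrow> 0 \<and> (\<exists>d\<in>limit_directions {(x, h x) |x. x \<in> semiline a0 \<inter> U}.
                 (\<lambda>m. p m /\<^sub>R norm (p m)) \<longlonglongrightarrow> d)"
        then obtain d where p0: "p \<longlonglongrightarrow> 0" and dL: "d \<in> limit_directions (GL a0)"
          and pd: "(\<lambda>m. p m /\<^sub>R norm (p m)) \<longlonglongrightarrow> d" unfolding GL_def by blast
        have nd: "norm d = 1" using dL unfolding limit_directions_def by blast
        have dG: "d \<in> limit_directions G" using D_mono[OF GLG] dL by blast
        obtain b' where b'G: "\<And>m. b' m \<in> G"
          and r1: "(\<lambda>m. norm (p m - b' m) / norm (p m)) \<longlonglongrightarrow> 0"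
          using S p0 pd dG unfolding SSP_map_def SSP_def G_def by blast
        have pne: "eventually (\<lambda>m. p m \<noteq> 0) sequentially" using L1[OF pd nd] .
        have cpb: "closeS p b'" using r1 unfolding closeS_def .
        have b'd: "(\<lambda>m. b' m /\<^sub>R norm (b' m)) \<longlonglongrightarrow> d" using L4[OF cpb pne pd] .
        have b'0: "b' \<longlonglongrightarrow> 0" using L5[OF cpb pne p0] .
        define x where "x m = fst (b' m)" for m
        have xU: "x m \<in> U" and b'x: "b' m = (x m, h (x m))" for m
          using b'G[of m] unfolding G_def graph_mem x_def by auto
        have b'eq: "b' = (\<lambda>m. (x m, h (x m)))" using b'x by auto
        have x0: "x \<longlonglongrightarrow> 0" using tendsto_fst[OF b'0] unfolding x_def by simp
        define \<alpha> where "\<alpha> = fst d \<bullet> a0"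
        have D1: "fst d = \<alpha> *\<^sub>R a0" and D2: "\<alpha> \<ge> 0"
          using DIR[OF a0 dL[unfolded GL_def]] unfolding \<alpha>_def[symmetric] by blast+
        define a1 where "a1 = fst d /\<^sub>R norm (fst d)"
        define y where "y = (\<lambda>m. norm (x m) *\<^sub>R a1)"
        note C = core[where x=x, OF U lip bnd0 c2 xU x0 b'd[unfolded b'eq] nd a1_def y_def]
        have nfd: "norm (fst d) = \<alpha>"
          using D1 D2 a0 by simp
        have "\<alpha> \<noteq> 0" using C(1) D1 by auto
        then have a1a0: "a1 = a0" unfolding a1_def nfd using D1 by simp
        define b where "b m = (if y m \<in> U then (y m, h (y m)) else 0)" for m
        have bGL: "b m \<in> {(x, h x) |x. x \<in> semiline a0 \<inter> U}" for m
        proof (cases "y m \<in> U")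
          case True
          have "y m \<in> semiline a0" unfolding y_def a1a0 by (rule semit) simp
          then show ?thesis using True unfolding b_def by auto
        next
          case False
          then show ?thesis unfolding b_def using semi0[of a0] U(2) h0
            by (auto simp: zero_prod_def intro!: exI[of _ 0])
        qed
        have "eventually (\<lambda>m. (y m, h (y m)) = b m) sequentially"
          using C(4) proof (rule eventually_mono)
          fix m assume "y m \<in> U" then show "(y m, h (y m)) = b m" unfolding b_def by simp
        qed
        then have "eventually (\<lambda>m. norm ((x m, h (x m)) - (y m, h (y m))) / norm (x m, h (x m))
            = norm ((x m, h (x m)) - b m) / norm (x m, h (x m))) sequentially"
          by (rule eventually_mono) simp
        from Lim_transform_eventually[OF C(5)[unfolded closeS_def] this]
        have cb'b: "closeS b' b" unfolding closeS_def b'eq .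
        have cpb2: "closeS p b" using L3[OF cpb cb'b pne] .
        have cbp: "closeS b p" using L2b[OF cpb2 pne] .
        show "\<exists>b. (\<forall>m. b m \<in> {(x, h x) |x. x \<in> semiline a0 \<inter> U}) \<and>
             (\<lambda>m. norm (p m - b m) / norm (p m)) \<longlonglongrightarrow> 0 \<and>
             (\<lambda>m. norm (p m - b m) / norm (b m)) \<longlonglongrightarrow> 0"
          using bGL cpb2 cbp unfolding closeS_def by (auto simp: norm_minus_commute)
      qed
    qed
  next
    assume H: "\<forall>a. norm a = 1 \<longrightarrow> SSP_map h (semiline a \<inter> U)"
    show "SSP_map h U" unfolding SSP_map_def SSP_def
    proof (intro allI impI)
      fix p :: "nat \<Rightarrow> 'a \<times> 'a"
      assume "p \<longlonglongrightarrow> 0 \<and> (\<exists>d\<in>limit_directions {(x, h x) |x. x \<in> U}.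
                 (\<lambda>m. p m /\<^sub>R norm (p m)) \<longlonglongrightarrow> d)"
      then obtain d where p0: "p \<longlonglongrightarrow> 0" and dG: "d \<in> limit_directions G"
          and pd: "(\<lambda>m. p m /\<^sub>R norm (p m)) \<longlonglongrightarrow> d" unfolding G_def by blast
      obtain w where w: "\<And>i. w i \<in> G - {0}" and w0: "w \<longlonglongrightarrow> 0"
        and wd: "(\<lambda>i. w i /\<^sub>R norm (w i)) \<longlonglongrightarrow> d" and nd: "norm d = 1"
        using dG unfolding limit_directions_def by blast
      define x where "x m = fst (w m)" for m
      have xU: "x m \<in> U" and wx: "w m = (x m, h (x m))" for m
        using w[of m] unfolding G_def graph_mem x_def by auto
      have weq: "w = (\<lambda>m. (x m, h (x m)))" using wx by auto
      have x0: "x \<longlonglongrightarrow> 0" using tendsto_fst[OF w0] unfolding x_def by simp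
      have xne: "x m \<noteq> 0" for m using w[of m] wx[of m] h0 by (auto simp: zero_prod_def)
      define a0 where "a0 = fst d /\<^sub>R norm (fst d)"
      define y where "y = (\<lambda>m. norm (x m) *\<^sub>R a0)"
      note C = core[where x=x, OF U lip bnd0 c2 xU x0 wd[unfolded weq] nd a0_def y_def]
      have wne: "eventually (\<lambda>m. w m \<noteq> 0) sequentially" using w by auto
      have cwy: "closeS w (\<lambda>m. (y m, h (y m)))" using C(5) weq by simp
      have yd: "(\<lambda>m. (y m, h (y m)) /\<^sub>R norm (y m, h (y m))) \<longlonglongrightarrow> d" using L4[OF cwy wne wd] .
      have Ny0: "(\<lambda>m. (y m, h (y m))) \<longlonglongrightarrow> 0" using L5[OF cwy wne w0] .
      obtain k where k: "\<And>i. i \<ge> k \<Longrightarrow> y i \<in> U" using C(4) unfolding eventually_sequentially by blast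
      define z where "z i = (y (i + k), h (y (i + k)))" for i
      have nyx: "norm (y m) = norm (x m)" for m using C(2) unfolding y_def by simp
      have yne: "y m \<noteq> 0" for m using xne[of m] nyx[of m] by (metis norm_eq_zero)
      have zGL: "z i \<in> GL a0 - {0}" for i
      proof -
        have "y (i + k) \<in> semiline a0" unfolding y_def by (rule semit) simp
        then show ?thesis using k[of "i + k"] yne[of "i + k"] unfolding z_def GL_def by (auto simp: zero_prod_def)
      qed
      have z0: "z \<longlonglongrightarrow> 0" unfolding z_def using LIMSEQ_ignore_initial_segment[OF Ny0, of k] by simp
      have zd: "(\<lambda>i. z i /\<^sub>R norm (z i)) \<longlonglongrightarrow> d" unfolding z_def
        using LIMSEQ_ignore_initial_segment[OF yd, of k] by simp
      have dGL: "d \<in> limit_directions (GL a0)"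
        unfolding limit_directions_def using nd zGL z0 zd by blast
      have "SSP (GL a0)" using H C(2) unfolding SSP_map_def GL_def by blast
      then obtain b where bGL: "\<And>m. b m \<in> GL a0"
        and r1: "(\<lambda>m. norm (p m - b m) / norm (p m)) \<longlonglongrightarrow> 0"
        and r2: "(\<lambda>m. norm (p m - b m) / norm (b m)) \<longlonglongrightarrow> 0"
        using p0 pd dGL unfolding SSP_def by blast
      show "\<exists>b. (\<forall>m. b m \<in> {(x, h x) |x. x \<in> U}) \<and>
             (\<lambda>m. norm (p m - b m) / norm (p m)) \<longlonglongrightarrow> 0 \<and>
             (\<lambda>m. norm (p m - b m) / norm (b m)) \<longlonglongrightarrow> 0"
        using bGL GLG r1 r2 unfolding G_def by blast
    qed
  qed
qed

end
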